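(* For generic $a,b,c\in\mathbb{C}$ define $\hat{\mathbf Q}_0(n;a;b,c)\equiv1$ and, for $k\ge1$, $\hat{\mathbf Q}_k(n;a;b,c)$ by the $k$-raising relation $$(k+\tfrac a2)(1+a)bc\,(n+\tfrac a2)\,\hat{\mathbf Q}_k(n;a;b,c)=(n+k+\tfrac a2)(n+a)(n+b)(n+c)(n+\tfrac12+\tfrac a2)\,\hat{\mathbf Q}_{k-1}(n;a+1;b+1,c+1)$$ $$\qquad+(n-k+\tfrac a2)\,n\,(n+a-b)(n+a-c)(n-\tfrac12+\tfrac a2)\,\hat{\mathbf Q}_{k-1}(n-1;a+1;b+1,c+1).$$ Then each $\hat{\mathbf Q}_k$ is a polynomial in $n$ of degree $4k$ (of degree $2k$ in $\lambda=n(n+a)$), and, setting $\mathbf Q_k^{(2)}(n;a;b,c)=(1+\tfrac{2n}{a})\hat{\mathbf Q}_k(n;a;b,c)$, for all integers $k\ge0$ one has near $x=0$ $${}_3F_2\!\left[\begin{matrix}\tfrac12+k+\tfrac a2,\ 1+k+\tfrac a2,\ 1-k+a-b-c\\ 1+a-b,\ 1+a-c\end{matrix}\,\Big|\,-\frac{4x}{(1-x)^2}\right]=(1+x)^{-1-2k}(1-x)^{1+2k+a}\sum_{n=0}^\infty\frac{(a)_n(b)_n(c)_n}{n!\,(1+a-b)_n(1+a-c)_n}\,\mathbf Q_k^{(2)}(n;a;b,c)\,x^n.$$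
   Context: $(c)_n$ denotes the Pochhammer symbol, $(c)_0=1$; ${}_pF_q$ is the generalized hypergeometric series. Parameters are generic: no lower parameter is a nonpositive integer and the divisions in the recurrence are by nonzero constants. *)

theory Defs
  imports "HOL-Analysis.Analysis" "HOL-Computational_Algebra.Polynomial"
begin

definition hyp3F2 :: "complex \<Rightarrow> complex \<Rightarrow> complex \<Rightarrow> complex \<Rightarrow> complex \<Rightarrow> complex \<Rightarrow> complex" where
  "hyp3F2 a1 a2 a3 b1 b2 z =
     (\<Sum>n. pochhammer a1 n * pochhammer a2 n * pochhammer a3 n
            / (pochhammer b1 n * pochhammer b2 n * fact n) * z ^ n)"

text \<open>The polynomials hat Q_k(n;a;b,c) in the variable n, defined by the k-raising relation:
  the right-hand side is divided (as a polynomial) by the constant times (n + a/2).\<close>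
fun Qhat :: "nat \<Rightarrow> complex \<Rightarrow> complex \<Rightarrow> complex \<Rightarrow> complex poly" where
  "Qhat 0 a b c = 1"
| "Qhat (Suc k) a b c =
     (let K = of_nat (Suc k) :: complex; Q = Qhat k (a+1) (b+1) (c+1) in
       ([:K + a/2, 1:] * [:a, 1:] * [:b, 1:] * [:c, 1:] * [:1/2 + a/2, 1:] * Q
        + [:a/2 - K, 1:] * [:0, 1:] * [:a - b, 1:] * [:a - c, 1:] * [:a/2 - 1/2, 1:]
            * pcompose Q [:-1, 1:])
       div smult ((K + a/2) * (1 + a) * b * c) [:a/2, 1:])"

end

theory Submission
  imports Defs "HOL-Complex_Analysis.Complex_Analysis"
begin

lemma notint_add1: "(a::complex) \<notin> \<int> \<Longrightarrow> a + 1 \<notin> \<int>"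
  by (metis Ints_1 Ints_diff add_diff_cancel_right')

lemma notint_half_plus_nat: "(a::complex) \<notin> \<int> \<Longrightarrow> of_nat n + a/2 \<noteq> 0"
proof
  assume "a \<notin> \<int>" "of_nat n + a/2 = 0"
  then have "a = of_int (- 2 * int n)" by (simp add: field_simps add_eq_0_iff)
  then show False using \<open>a \<notin> \<int>\<close> by (metis Ints_of_int)
qed

lemma notint_1plus: "(a::complex) \<notin> \<int> \<Longrightarrow> 1 + a \<noteq> 0"
  by (metis Ints_1 Ints_minus add_eq_0_iff)

definition Num :: "nat \<Rightarrow> complex \<Rightarrow> complex \<Rightarrow> complex \<Rightarrow> complex poly" where
 "Num k a b c = (let K = of_nat (Suc k) :: complex; Q = Qhat k (a+1) (b+1) (c+1) in
       ([:K + a/2, 1:] * [:a, 1:] * [:b, 1:] * [:c, 1:] * [:1/2 + a/2, 1:] * Q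
        + [:a/2 - K, 1:] * [:0, 1:] * [:a - b, 1:] * [:a - c, 1:] * [:a/2 - 1/2, 1:]
            * pcompose Q [:-1, 1:]))"

lemma Qhat_Suc: "Qhat (Suc k) a b c = Num k a b c div smult ((of_nat (Suc k) + a/2) * (1 + a) * b * c) [:a/2, 1:]"
  by (simp add: Num_def Let_def)

lemma poly_Num: "poly (Num k a b c) x =
   (x + of_nat (Suc k) + a/2) * (x + a) * (x + b) * (x + c) * (x + 1/2 + a/2) * poly (Qhat k (a+1) (b+1) (c+1)) x
 + (x - of_nat (Suc k) + a/2) * x * (x + a - b) * (x + a - c) * (x - 1/2 + a/2) * poly (Qhat k (a+1) (b+1) (c+1)) (x - 1)"
proof -
  have "poly (pcompose (Qhat k (a+1) (b+1) (c+1)) [:-1, 1:]) x = poly (Qhat k (a+1) (b+1) (c+1)) (x - 1)"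
    by (simp add: poly_pcompose)
  then show ?thesis unfolding Num_def Let_def poly_add poly_mult
    by (simp del: poly_pcompose add: algebra_simps)
qed

lemma step:
  fixes a b c :: complex and k :: nat
  assumes a: "a \<notin> \<int>" and b: "b \<notin> \<int>" and c: "c \<notin> \<int>"
  defines "Q \<equiv> Qhat k (a+1) (b+1) (c+1)"
  assumes Q0: "Q \<noteq> 0" and Qd: "degree Q = 4 * k" and Qs: "\<forall>x. poly Q (-x-(a+1)) = poly Q x"
  shows "smult ((of_nat (Suc k) + a/2) * (1 + a) * b * c) [:a/2, 1:] * Qhat (Suc k) a b c = Num k a b c
     \<and> Qhat (Suc k) a b c \<noteq> 0 \<and> degree (Qhat (Suc k) a b c) = 4 * Suc k
     \<and> (\<forall>x. poly (Qhat (Suc k) a b c) (-x-a) = poly (Qhat (Suc k) a b c) x)"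
proof -
  define C where "C = (of_nat (Suc k) + a/2) * (1 + a) * b * c"
  have C0: "C \<noteq> 0" unfolding C_def using a b c notint_half_plus_nat[OF a] notint_1plus[OF a]
    by (auto simp del: of_nat_Suc)
  define D where "D = smult C [:a/2, 1:]"
  have q1: "poly Q (-a/2 - 1) = poly Q (-a/2)"
  proof -
    have "-(-a/2) - (a+1) = -a/2 - 1" by (simp add: field_simps)
    then show ?thesis using Qs[rule_format, of "-a/2"] by metis
  qed
  have "poly (Num k a b c) (-a/2) = 0"
    unfolding poly_Num Q_def[symmetric] using q1 by (simp add: algebra_simps)
  then have "[:a/2, 1:] dvd Num k a b c"
    using poly_eq_0_iff_dvd[of "Num k a b c" "-a/2"] by simp
  then have dvdD: "D dvd Num k a b c" unfolding D_def using C0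
    by (subst smult_dvd_iff) simp
  have eq: "D * Qhat (Suc k) a b c = Num k a b c"
    unfolding Qhat_Suc D_def[symmetric] C_def[symmetric] using dvdD by simp
  have Num_eq: "Num k a b c = [:of_nat (Suc k) + a/2, 1:] * [:a, 1:] * [:b, 1:] * [:c, 1:] * [:1/2 + a/2, 1:] * Q
        + [:a/2 - of_nat (Suc k), 1:] * [:0, 1:] * [:a - b, 1:] * [:a - c, 1:] * [:a/2 - 1/2, 1:]
            * pcompose Q [:-1, 1:]" (is "_ = ?T1 + ?T2")
    unfolding Num_def Q_def Let_def by simp
  have d1: "degree ?T1 = 4 * k + 5" using Q0 Qd by (simp add: degree_mult_eq del: mult_pCons_left mult_pCons_right)
  have Qc0: "pcompose Q [:-1, 1:] \<noteq> 0" using Q0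
    by (simp add: pcompose_eq_0_iff)
  have dQc: "degree (pcompose Q [:-1, 1:]) = 4 * k" using Qd by (simp add: degree_pcompose)
  have d2: "degree ?T2 = 4 * k + 5" using Qc0 dQc by (simp add: degree_mult_eq del: mult_pCons_left mult_pCons_right)
  have l1: "lead_coeff ?T1 = lead_coeff Q" by (simp add: lead_coeff_mult del: mult_pCons_left mult_pCons_right)
  have l2: "lead_coeff ?T2 = lead_coeff Q" by (simp add: lead_coeff_mult lead_coeff_comp del: mult_pCons_left mult_pCons_right)
  have cN: "coeff (Num k a b c) (4*k+5) = 2 * lead_coeff Q"
    unfolding Num_eq coeff_add using l1 l2 d1 d2 by simp
  have "coeff (Num k a b c) (4*k+5) \<noteq> 0" using cN Q0 by simp
  then have "degree (Num k a b c) \<ge> 4*k+5" by (rule le_degree)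
  moreover have "degree (Num k a b c) \<le> 4*k+5" unfolding Num_eq
    using d1 d2 degree_add_le by (metis max.idem degree_add_le_max)
  ultimately have dN: "degree (Num k a b c) = 4*k+5" by simp
  then have N0: "Num k a b c \<noteq> 0" by auto
  have D0: "D \<noteq> 0" unfolding D_def using C0 by simp
  have Qn0: "Qhat (Suc k) a b c \<noteq> 0" using eq N0 by auto
  have "degree (Num k a b c) = degree D + degree (Qhat (Suc k) a b c)"
    unfolding eq[symmetric] using D0 Qn0 by (simp add: degree_mult_eq)
  then have dQn: "degree (Qhat (Suc k) a b c) = 4 * Suc k" using dN C0 unfolding D_def by simp
  have pN: "C * (x + a/2) * poly (Qhat (Suc k) a b c) x = poly (Num k a b c) x" for x
    unfolding eq[symmetric] D_def by (simp add: algebra_simps)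
  have Nsym: "poly (Num k a b c) (-x-a) = - poly (Num k a b c) x" for x
  proof -
    have "-(x-1) - (a+1) = -x-a" by (simp add: algebra_simps)
    then have e1: "poly Q (-x-a) = poly Q (x-1)" using Qs[rule_format, of "x-1"] by metis
    have "-x - (a+1) = -x-a-1" by (simp add: algebra_simps)
    then have e2: "poly Q (-x-a-1) = poly Q x" using Qs[rule_format, of "x"] by metis
    show ?thesis unfolding poly_Num Q_def[symmetric] e1 e2
      by (simp add: field_simps)
  qed
  have sym: "poly (Qhat (Suc k) a b c) (-x-a) = poly (Qhat (Suc k) a b c) x" for x
  proof (cases "x + a/2 = 0")
    case True
    then have "-x-a = x" by (simp add: field_simps add_eq_0_iff)
    then show ?thesis by metis
  next
    case False
    have "C * (-x-a + a/2) * poly (Qhat (Suc k) a b c) (-x-a) = - (C * (x + a/2) * poly (Qhat (Suc k) a b c) x)"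
      unfolding pN Nsym ..
    then have "C * (x + a/2) * (poly (Qhat (Suc k) a b c) (-x-a) - poly (Qhat (Suc k) a b c) x) = 0"
      by (simp add: algebra_simps)
    then show ?thesis using C0 False by simp
  qed
  show ?thesis using eq Qn0 dQn sym unfolding D_def C_def by blast
qed

lemma poly_all:
  assumes "a \<notin> \<int>" "b \<notin> \<int>" "c \<notin> \<int>"
  shows "Qhat k a b c \<noteq> 0 \<and> degree (Qhat k a b c) = 4 * k \<and> (\<forall>x. poly (Qhat k a b c) (-x-a) = poly (Qhat k a b c) x)"
  using assms
proof (induction k arbitrary: a b c)
  case 0
  then show ?case by simp
next
  case (Suc k)
  have "Qhat k (a+1) (b+1) (c+1) \<noteq> 0 \<and> degree (Qhat k (a+1) (b+1) (c+1)) = 4 * k \<and>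
     (\<forall>x. poly (Qhat k (a+1) (b+1) (c+1)) (-x-(a+1)) = poly (Qhat k (a+1) (b+1) (c+1)) x)"
    using Suc.IH[OF notint_add1[OF Suc.prems(1)] notint_add1[OF Suc.prems(2)] notint_add1[OF Suc.prems(3)]] by simp
  then show ?case using step[OF Suc.prems] by blast
qed

lemma raising:
  assumes "a \<notin> \<int>" "b \<notin> \<int>" "c \<notin> \<int>"
  shows "smult ((of_nat (Suc k) + a/2) * (1 + a) * b * c) [:a/2, 1:] * Qhat (Suc k) a b c = Num k a b c"
proof -
  have "Qhat k (a+1) (b+1) (c+1) \<noteq> 0 \<and> degree (Qhat k (a+1) (b+1) (c+1)) = 4 * k \<and>
     (\<forall>x. poly (Qhat k (a+1) (b+1) (c+1)) (-x-(a+1)) = poly (Qhat k (a+1) (b+1) (c+1)) x)"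
    using poly_all[OF notint_add1[OF assms(1)] notint_add1[OF assms(2)] notint_add1[OF assms(3)]] by simp
  then show ?thesis using step[OF assms] by blast
qed

lemma sym_poly_comp:
  fixes a :: complex
  assumes a0: "a \<noteq> 0"
  shows "(\<forall>x. poly p (-x-a) = poly p x) \<Longrightarrow> \<exists>R. p = R \<circ>\<^sub>p [:0, a, 1:]"
proof (induction "degree p" arbitrary: p rule: less_induct)
  case less
  define L where "L = [:0, a, 1:]"
  have L0: "L \<noteq> 0" unfolding L_def by simp
  have dL: "degree L = 2" unfolding L_def by simp
  define q where "q = p div L"
  define r where "r = p mod L"
  have pqr: "p = q * L + r" unfolding q_def r_def by simp
  have dr: "degree r < 2 \<or> r = 0" using degree_mod_less[OF L0, of p] dL unfolding r_def by auto
  have "r = [:coeff r 0, coeff r 1:]"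
  proof (rule poly_eqI)
    fix n show "coeff r n = coeff [:coeff r 0, coeff r 1:] n"
    proof (cases "n < 2")
      case True then show ?thesis by (cases n) (auto simp: less_Suc_eq)
    next
      case False then show ?thesis using dr by (auto simp: coeff_eq_0 coeff_pCons split: nat.split)
    qed
  qed
  then obtain r0 r1 where r_eq: "r = [:r0, r1:]" by blast
  have pL: "poly L y = y * (a + y)" for y unfolding L_def by (simp add: algebra_simps)
  have Ls: "poly L (-x-a) = poly L x" for x unfolding pL by (simp add: algebra_simps)
  have "poly p (-0-a) = poly p 0" using less.prems by blast
  then have "poly r (-a) = poly r 0" unfolding pqr by (simp add: pL)
  then have "r1 = 0" using a0 unfolding r_eq by simp
  then have r_eq2: "r = [:r0:]" using r_eq by simp
  define \<sigma> where "\<sigma> = [:-a, -1:]"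
  have ps: "poly \<sigma> x = -x-a" for x unfolding \<sigma>_def by simp
  have "poly ((q \<circ>\<^sub>p \<sigma>) * L) x = poly (q * L) x" for x
  proof -
    have "poly p (-x-a) = poly p x" using less.prems by blast
    then have "poly q (-x-a) * poly L (-x-a) + poly r (-x-a) = poly q x * poly L x + poly r x"
      unfolding pqr by simp
    then show ?thesis unfolding r_eq2 by (simp add: Ls poly_pcompose ps)
  qed
  then have "poly ((q \<circ>\<^sub>p \<sigma>) * L) = poly (q * L)" by (rule ext)
  then have "(q \<circ>\<^sub>p \<sigma>) * L = q * L" by (simp only: poly_eq_poly_eq_iff)
  then have qs0: "q \<circ>\<^sub>p \<sigma> = q" using L0 by simp
  have qs: "\<forall>x. poly q (-x-a) = poly q x"
  proof
    fix x show "poly q (-x-a) = poly q x" using arg_cong[OF qs0, of "\<lambda>f. poly f x"] by (simp add: poly_pcompose ps)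
  qed
  show ?case
  proof (cases "q = 0")
    case True
    then have "p = [:r0:] \<circ>\<^sub>p [:0, a, 1:]" using pqr r_eq2 by simp
    then show ?thesis by blast
  next
    case False
    have dqL: "degree (q * L) = degree q + 2" using False L0 dL by (simp add: degree_mult_eq)
    have "degree p = degree (q * L)" unfolding pqr
      using dqL r_eq2 by (subst degree_add_eq_left) auto
    then have "degree q < degree p" using dqL by simp
    then obtain R' where R': "q = R' \<circ>\<^sub>p [:0, a, 1:]" using less.hyps qs by blast
    have "p = (R' * [:0, 1:] + [:r0:]) \<circ>\<^sub>p [:0, a, 1:]"
      unfolding pcompose_add pcompose_mult using pqr r_eq2 R' L_def by (simp add: pcompose_pCons)
    then show ?thesis by blast
  qed
qed

definition sS :: "complex \<Rightarrow> complex \<Rightarrow> complex \<Rightarrow> nat \<Rightarrow> nat \<Rightarrow> complex" where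
 "sS a b c n i = pochhammer (- of_nat n) i * pochhammer (a + of_nat n) i * pochhammer (1+a-b-c) i
     / (pochhammer (1+a-b) i * pochhammer (1+a-c) i * fact i)"

definition DD :: "complex \<Rightarrow> complex \<Rightarrow> complex \<Rightarrow> nat \<Rightarrow> nat \<Rightarrow> complex" where
 "DD a b c n i = - ((2 * of_nat n + 1 + a) / ((of_nat n + 1) * (1 + a - b + of_nat n) * (1 + a - c + of_nat n) * (a + of_nat n)))
    * pochhammer (- of_nat n - 1) i * pochhammer (a + of_nat n) i * pochhammer (1+a-b-c) i
    * of_nat i * (a - b + of_nat i) * (a - c + of_nat i)
     / (pochhammer (1+a-b) i * pochhammer (1+a-c) i * fact i)"

lemma poch_shift: "z * pochhammer (z + 1) i = pochhammer z i * (z + of_nat i)"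
  by (metis pochhammer_Suc pochhammer_rec)

lemma wz_rational0:
  fixes a g d x N :: complex
  assumes "a + N \<noteq> 0" "g + N \<noteq> 0" "d + N \<noteq> 0" "N + 1 \<noteq> 0"
  shows "(a + N + x) / (a + N)
     - ((1 + a - g + N) * (1 + a - d + N) / ((g + N) * (d + N))) * (N + 1 - x) / (N + 1)
   = ((2 * N + 1 + a) / ((N + 1) * (g + N) * (d + N) * (a + N)))
     * (- (x - N - 1) * (a + N + x) * (g + d - 1 - a + x) + x * (g - 1 + x) * (d - 1 + x))"
proof -
  have h1: "inverse (a+N) * (a+N) = 1" "inverse (g+N) * (g+N) = 1" "inverse (d+N) * (d+N) = 1" "inverse (N+1) * (N+1) = 1"
    using assms by auto
  show ?thesis unfolding divide_inverse inverse_mult_distrib using h1 by algebra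
qed

lemma notint_poch_nz:
  fixes z :: complex
  assumes "z - 1 \<notin> \<int>"
  shows "pochhammer z i \<noteq> 0" "z + of_nat i \<noteq> 0"
proof -
  have *: "z + of_nat k \<noteq> 0" for k
  proof
    assume "z + of_nat k = 0"
    then have "z - 1 = of_int (- int k - 1)" by (simp add: algebra_simps add_eq_0_iff)
    then show False using assms by (metis Ints_of_int)
  qed
  then show "z + of_nat i \<noteq> 0" .
  show "pochhammer z i \<noteq> 0"
    unfolding pochhammer_eq_0_iff using * by (metis add.commute add_eq_0_iff)
qed

lemma frac_cancel: "(G::complex) \<noteq> 0 \<Longrightarrow> H \<noteq> 0 \<Longrightarrow> F \<noteq> 0 \<Longrightarrow> u \<noteq> 0 \<Longrightarrow> v \<noteq> 0 \<Longrightarrow> w \<noteq> 0 \<Longrightarrow>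
   X * u * v * w / ((G * u) * (H * v) * (w * F)) = X / (G * H * F)"
  by (simp add: field_simps)

lemma wz_abstract:
  fixes A B C D E F G H K L W \<rho> \<kappa> :: complex
  assumes "A - \<rho> * B / C = \<kappa> * (- D * E * F + G * H * K)"
  shows "W * A - \<rho> * (W * (B / C)) = - \<kappa> * W * (D * E * F) - - \<kappa> * W * (G * H * K)"
proof -
  have "W * A - \<rho> * (W * (B / C)) = W * (A - \<rho> * B / C)" by (simp add: algebra_simps)
  also have "\<dots> = W * (\<kappa> * (- D * E * F + G * H * K))" using assms by simp
  finally show ?thesis by (simp add: algebra_simps)
qed

lemma wz_step:
  fixes a b c :: complex and n i :: nat
  assumes an: "a + of_nat n \<noteq> 0" and ab: "a - b \<notin> \<int>" and ac: "a - c \<notin> \<int>"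
  shows "sS a b c (Suc n) i - ((b + of_nat n) * (c + of_nat n) / ((1 + a - b + of_nat n) * (1 + a - c + of_nat n))) * sS a b c n i
     = DD a b c n (Suc i) - DD a b c n i"
proof -
  define A1 where "A1 = pochhammer (- of_nat n - 1 :: complex) i"
  define A2 where "A2 = pochhammer (a + of_nat n) i"
  define A3 where "A3 = pochhammer (1+a-b-c) i"
  define G where "G = pochhammer (1+a-b) i"
  define H where "H = pochhammer (1+a-c) i"
  define W where "W = A1 * A2 * A3 / (G * H * fact i)"
  define \<kappa> where "\<kappa> = (2 * of_nat n + 1 + a) / ((of_nat n + 1) * (1 + a - b + of_nat n) * (1 + a - c + of_nat n) * (a + of_nat n))"
  have ab': "(1 + a - b) - 1 \<notin> \<int>" using ab by simp
  have ac': "(1 + a - c) - 1 \<notin> \<int>" using ac by simp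
  note nz = notint_poch_nz[OF ab'] notint_poch_nz[OF ac']
  have G0: "G \<noteq> 0" and H0: "H \<noteq> 0" using nz unfolding G_def H_def by auto
  have gi: "1 + a - b + of_nat i \<noteq> 0" and hi: "1 + a - c + of_nat i \<noteq> 0" using nz by auto
  have n1: "(of_nat n + 1 :: complex) \<noteq> 0" by (metis of_nat_Suc of_nat_neq_0 add.commute)
  have "- of_nat (Suc n) = (- of_nat n - 1 :: complex)" by simp
  then have e1: "pochhammer (- of_nat (Suc n)) i = A1" unfolding A1_def by metis
  have e2: "pochhammer (a + of_nat (Suc n)) i = A2 * (a + of_nat n + of_nat i) / (a + of_nat n)"
    using poch_shift[of "a + of_nat n" i] an unfolding A2_def by (simp add: field_simps)
  have m1: "- of_nat n - 1 + 1 = (- of_nat n :: complex)" by simp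
  have p3: "(- of_nat n - 1) * pochhammer (- of_nat n) i = A1 * (- of_nat n - 1 + of_nat i)"
    using poch_shift[of "- of_nat n - 1 :: complex" i, unfolded m1] unfolding A1_def .
  have e3: "pochhammer (- of_nat n) i = A1 * (of_nat n + 1 - of_nat i) / (of_nat n + 1)"
    using p3 n1 by (simp add: field_simps)
  have s1: "sS a b c (Suc n) i = W * ((a + of_nat n + of_nat i) / (a + of_nat n))"
    unfolding sS_def e1 e2 W_def A3_def G_def H_def by (simp add: divide_inverse mult_ac)
  have s0: "sS a b c n i = W * ((of_nat n + 1 - of_nat i) / (of_nat n + 1))"
    unfolding sS_def e3 W_def A3_def G_def H_def A2_def by (simp add: divide_inverse mult_ac)
  have d0: "DD a b c n i = - \<kappa> * W * (of_nat i * (a - b + of_nat i) * (a - c + of_nat i))"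
    unfolding DD_def \<kappa>_def W_def A1_def A2_def A3_def G_def H_def by (simp add: divide_inverse mult_ac)
  have DDk: "DD a b c n j = - \<kappa> * pochhammer (- of_nat n - 1) j * pochhammer (a + of_nat n) j * pochhammer (1+a-b-c) j
    * of_nat j * (a - b + of_nat j) * (a - c + of_nat j)
     / (pochhammer (1+a-b) j * pochhammer (1+a-c) j * fact j)" for j
    unfolding DD_def \<kappa>_def by simp
  have d1: "DD a b c n (Suc i) = - \<kappa> * W * ((of_nat i - of_nat n - 1) * (a + of_nat n + of_nat i) * (1 + a - b - c + of_nat i))"
  proof -
    have f0: "fact i \<noteq> (0::complex)" by simp
    have i1: "(of_nat i + 1 :: complex) \<noteq> 0" by (metis of_nat_Suc of_nat_neq_0 add.commute)
    have r1: "a - b + of_nat (Suc i) = 1 + a - b + of_nat i" "a - c + of_nat (Suc i) = 1 + a - c + of_nat i"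
      "of_nat (Suc i) = (of_nat i + 1 :: complex)" "fact (Suc i) = (of_nat i + 1) * (fact i :: complex)" by simp_all
    have r2: "a - b + (of_nat i + 1) = 1 + a - b + of_nat i" "a - c + (of_nat i + 1) = 1 + a - c + of_nat i" by simp_all
    have "DD a b c n (Suc i) = (- \<kappa> * (A1*A2*A3) * ((- of_nat n - 1 + of_nat i) * (a + of_nat n + of_nat i) * (1+a-b-c + of_nat i)))
       * (1 + a - b + of_nat i) * (1 + a - c + of_nat i) * (of_nat i + 1)
       / ((G * (1 + a - b + of_nat i)) * (H * (1 + a - c + of_nat i)) * ((of_nat i + 1) * fact i))"
      unfolding DDk r1 r2 pochhammer_Suc A1_def A2_def A3_def G_def H_def by (simp only: mult_ac)
    also have "\<dots> = (- \<kappa> * (A1*A2*A3) * ((- of_nat n - 1 + of_nat i) * (a + of_nat n + of_nat i) * (1+a-b-c + of_nat i))) / (G * H * fact i)"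
      using G0 H0 gi hi f0 i1 by (simp add: frac_cancel)
    also have "\<dots> = - \<kappa> * W * ((of_nat i - of_nat n - 1) * (a + of_nat n + of_nat i) * (1 + a - b - c + of_nat i))"
    proof -
      have "(- of_nat n - 1 + of_nat i) = (of_nat i - of_nat n - 1 :: complex)" by simp
      then show ?thesis unfolding W_def by (simp add: mult_ac)
    qed
    finally show ?thesis .
  qed
  have key: "(a + of_nat n + of_nat i) / (a + of_nat n)
     - ((1 + a - (1 + a - b) + of_nat n) * (1 + a - (1 + a - c) + of_nat n) / (((1 + a - b) + of_nat n) * ((1 + a - c) + of_nat n))) * (of_nat n + 1 - of_nat i) / (of_nat n + 1)
   = ((2 * of_nat n + 1 + a) / ((of_nat n + 1) * ((1 + a - b) + of_nat n) * ((1 + a - c) + of_nat n) * (a + of_nat n)))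
     * (- (of_nat i - of_nat n - 1) * (a + of_nat n + of_nat i) * ((1 + a - b) + (1 + a - c) - 1 - a + of_nat i) + of_nat i * ((1 + a - b) - 1 + of_nat i) * ((1 + a - c) - 1 + of_nat i))"
    by (rule wz_rational0) (use an nz n1 in auto)
  have q1: "1 + a - (1 + a - b) + of_nat n = b + of_nat n" "1 + a - (1 + a - c) + of_nat n = c + of_nat n"
    "(1 + a - b) + (1 + a - c) - 1 - a + of_nat i = 1 + a - b - c + of_nat i"
    "(1 + a - b) - 1 + of_nat i = a - b + of_nat i" "(1 + a - c) - 1 + of_nat i = a - c + of_nat i"
    by (simp_all add: algebra_simps)
  have key': "(a + of_nat n + of_nat i) / (a + of_nat n)
     - ((b + of_nat n) * (c + of_nat n) / ((1 + a - b + of_nat n) * (1 + a - c + of_nat n))) * (of_nat n + 1 - of_nat i) / (of_nat n + 1)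
   = \<kappa> * (- (of_nat i - of_nat n - 1) * (a + of_nat n + of_nat i) * (1 + a - b - c + of_nat i) + of_nat i * (a - b + of_nat i) * (a - c + of_nat i))"
    using key unfolding q1 \<kappa>_def .
  show ?thesis unfolding s1 s0 d0 d1
    by (rule wz_abstract[OF key'])

qed

lemma saal:
  fixes a b c :: complex
  assumes a: "a \<notin> \<int>" and ab: "a - b \<notin> \<int>" and ac: "a - c \<notin> \<int>"
  shows "(\<Sum>i<Suc n. sS a b c n i) = pochhammer b n * pochhammer c n / (pochhammer (1+a-b) n * pochhammer (1+a-c) n)"
proof (induction n)
  case 0
  then show ?case by (simp add: sS_def)
next
  case (Suc n)
  have an: "a + of_nat n \<noteq> 0"
  proof
    assume "a + of_nat n = 0"
    then have "a = of_int (- int n)" by (simp add: add_eq_0_iff)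
    then show False using a by (metis Ints_of_int)
  qed
  have ab': "(1 + a - b) - 1 \<notin> \<int>" using ab by simp
  have ac': "(1 + a - c) - 1 \<notin> \<int>" using ac by simp
  note nz = notint_poch_nz[OF ab'] notint_poch_nz[OF ac']
  define \<rho> where "\<rho> = (b + of_nat n) * (c + of_nat n) / ((1 + a - b + of_nat n) * (1 + a - c + of_nat n))"
  have "(\<Sum>i<Suc (Suc n). sS a b c (Suc n) i) = (\<Sum>i<Suc (Suc n). \<rho> * sS a b c n i + (DD a b c n (Suc i) - DD a b c n i))"
    by (rule sum.cong) (use wz_step[OF an ab ac] in \<open>auto simp: \<rho>_def algebra_simps\<close>)
  also have "\<dots> = \<rho> * (\<Sum>i<Suc (Suc n). sS a b c n i) + (DD a b c n (Suc (Suc n)) - DD a b c n 0)"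
    by (simp only: sum.distrib sum_distrib_left sum_lessThan_telescope)
  also have "DD a b c n (Suc (Suc n)) = 0"
  proof -
    have "pochhammer (- of_nat n - 1 :: complex) (Suc (Suc n)) = 0"
    proof -
      have e: "- of_nat (Suc n) = (- of_nat n - 1 :: complex)" by simp
      show ?thesis using pochhammer_of_nat_eq_0_lemma[of "Suc n" "Suc (Suc n)", where 'a=complex] unfolding e by simp
    qed
    then show ?thesis unfolding DD_def by simp
  qed
  also have "DD a b c n 0 = 0" unfolding DD_def by simp
  also have "sS a b c n (Suc n) = 0"
    unfolding sS_def using pochhammer_of_nat_eq_0_lemma[of n "Suc n", where 'a=complex] by simp
  then have "(\<Sum>i<Suc (Suc n). sS a b c n i) = (\<Sum>i<Suc n. sS a b c n i)" by simp
  also note Suc.IH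
  finally show ?case unfolding \<rho>_def using nz by (simp add: pochhammer_Suc field_simps)
qed

declare Qhat.simps(2)[simp del]

definition Hs :: "complex \<Rightarrow> complex \<Rightarrow> complex \<Rightarrow> complex \<Rightarrow> complex \<Rightarrow> complex fps" where
 "Hs a1 a2 a3 b1 b2 = Abs_fps (\<lambda>n. pochhammer a1 n * pochhammer a2 n * pochhammer a3 n / (pochhammer b1 n * pochhammer b2 n * fact n))"

lemma hyp_eval: "hyp3F2 a1 a2 a3 b1 b2 z = eval_fps (Hs a1 a2 a3 b1 b2) z"
  unfolding hyp3F2_def eval_fps_def Hs_def by simp

definition HH :: "nat \<Rightarrow> complex \<Rightarrow> complex \<Rightarrow> complex \<Rightarrow> complex fps" where
 "HH k a b c = Hs (1/2 + of_nat k + a/2) (1 + of_nat k + a/2) (1 - of_nat k + a - b - c) (1 + a - b) (1 + a - c)"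

lemma X_deriv_nth: "(fps_X * fps_deriv f) $ n = of_nat n * f $ n"
  by (cases n) (simp_all add: fps_X_mult_nth)

lemma HH_Suc:
  fixes a b c :: complex
  assumes "of_nat (Suc j) + a/2 \<noteq> 0"
  shows "HH (Suc j) a b c = HH j (a+1) (b+1) (c+1)
     + fps_const (1 / (of_nat (Suc j) + a/2)) * (fps_X * fps_deriv (HH j (a+1) (b+1) (c+1)))"
proof (rule fps_ext)
  fix n
  define \<alpha> where "\<alpha> = of_nat (Suc j) + a/2"
  have p1: "1/2 + of_nat (Suc j) + a/2 = \<alpha> + 1/2" "1 + of_nat (Suc j) + a/2 = \<alpha> + 1"
    "1/2 + of_nat j + (a+1)/2 = \<alpha>" "1 + of_nat j + (a+1)/2 = \<alpha> + 1/2"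
    "1 - of_nat j + (a+1) - (b+1) - (c+1) = 1 - of_nat (Suc j) + a - b - c"
    "1 + (a+1) - (b+1) = 1 + a - b" "1 + (a+1) - (c+1) = 1 + a - c"
    unfolding \<alpha>_def by (simp_all add: field_simps)
  have sh: "\<alpha> * pochhammer (\<alpha> + 1) n = pochhammer \<alpha> n * (\<alpha> + of_nat n)" by (rule poch_shift)
  have a0: "\<alpha> \<noteq> 0" using assms unfolding \<alpha>_def .
  have "pochhammer (\<alpha> + 1) n = pochhammer \<alpha> n + 1 / \<alpha> * (of_nat n * pochhammer \<alpha> n)"
    using sh a0 by (simp add: field_simps)
  then show "HH (Suc j) a b c $ n = (HH j (a+1) (b+1) (c+1)
     + fps_const (1 / (of_nat (Suc j) + a/2)) * (fps_X * fps_deriv (HH j (a+1) (b+1) (c+1)))) $ n"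
    unfolding HH_def Hs_def fps_add_nth fps_mult_left_const_nth X_deriv_nth p1 \<alpha>_def[symmetric]
    by (simp add: algebra_simps add_divide_distrib)
qed

definition Acoef :: "complex \<Rightarrow> complex \<Rightarrow> complex \<Rightarrow> nat \<Rightarrow> complex" where
  "Acoef a b c n = pochhammer a n * pochhammer b n * pochhammer c n / (fact n * pochhammer (1 + a - b) n * pochhammer (1 + a - c) n)"

definition UU :: "nat \<Rightarrow> complex \<Rightarrow> complex \<Rightarrow> complex \<Rightarrow> complex fps" where
  "UU k a b c = Abs_fps (\<lambda>n. Acoef a b c n * ((1 + 2 * of_nat n / a) * poly (Qhat k a b c) (of_nat n)))"

lemma A_Suc: "Acoef a b c (Suc m) = Acoef a b c m * ((a + of_nat m) * (b + of_nat m) * (c + of_nat m)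
   / ((of_nat m + 1) * (1 + a - b + of_nat m) * (1 + a - c + of_nat m)))"
proof -
  have e: "of_nat (Suc m) = (of_nat m + 1::complex)" by simp
  show ?thesis unfolding Acoef_def pochhammer_Suc fact_Suc of_nat_mult e
    by (simp only: times_divide_times_eq mult_ac)
qed

lemma A_shift:
  assumes "a \<noteq> 0" "b \<noteq> 0" "c \<noteq> 0"
  shows "Acoef (a+1) (b+1) (c+1) m = Acoef a b c m * ((a + of_nat m) * (b + of_nat m) * (c + of_nat m) / (a * b * c))"
proof -
  have e: "1 + (a + 1) - (b + 1) = 1 + a - b" "1 + (a + 1) - (c + 1) = 1 + a - c" by simp_all
  have pa: "z \<noteq> 0 \<Longrightarrow> pochhammer (z+1) m = pochhammer z m * (z + of_nat m) / z" for z :: complex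
    by (metis poch_shift nonzero_mult_div_cancel_left)
  show ?thesis unfolding Acoef_def e pa[OF assms(1)] pa[OF assms(2)] pa[OF assms(3)]
    by (simp only: times_divide_times_eq divide_divide_eq_left mult_ac)
qed

lemma UU_coeff_Suc:
  fixes a b c :: complex and j m :: nat
  assumes a: "a \<notin> \<int>" and b: "b \<notin> \<int>" and c: "c \<notin> \<int>" and ab: "a - b \<notin> \<int>" and ac: "a - c \<notin> \<int>"
  defines "\<alpha> \<equiv> of_nat (Suc j) + a/2" and "\<beta> \<equiv> 1 + a/2 - of_nat (Suc j)"
  defines "V \<equiv> UU j (a+1) (b+1) (c+1)"
  shows "\<alpha> * UU (Suc j) a b c $ Suc m = (\<alpha> + of_nat (Suc m)) * V $ Suc m + (\<beta> + of_nat m) * V $ m"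
proof -
  define x where "x = (of_nat (Suc m) :: complex)"
  define K where "K = (of_nat (Suc j) :: complex)"
  define Qk where "Qk = poly (Qhat (Suc j) a b c) x"
  define Q1 where "Q1 = poly (Qhat j (a+1) (b+1) (c+1)) x"
  define Q0 where "Q0 = poly (Qhat j (a+1) (b+1) (c+1)) (of_nat m)"
  define A0 where "A0 = Acoef a b c m"
  define M where "M = (of_nat m :: complex)"
  have xM: "x = M + 1" unfolding x_def M_def by simp
  have a0: "a \<noteq> 0" and b0: "b \<noteq> 0" and c0: "c \<noteq> 0" using a b c by auto
  have a1: "a + 1 \<noteq> 0" using notint_1plus[OF a] by (simp add: add.commute)
  have ab': "(1 + a - b) - 1 \<notin> \<int>" using ab by simp
  have ac': "(1 + a - c) - 1 \<notin> \<int>" using ac by simp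
  have g0: "1 + a - b + M \<noteq> 0" and d0: "1 + a - c + M \<noteq> 0"
    using notint_poch_nz(2)[OF ab', of m] notint_poch_nz(2)[OF ac', of m] unfolding M_def by auto
  have m0: "M + 1 \<noteq> 0" unfolding M_def by (metis of_nat_Suc of_nat_neq_0 add.commute)
  have R: "(K + a/2) * (1 + a) * b * c * (a/2 + x) * Qk =
     (x + K + a/2) * (x + a) * (x + b) * (x + c) * (x + 1/2 + a/2) * Q1
   + (x - K + a/2) * x * (x + a - b) * (x + a - c) * (x - 1/2 + a/2) * Q0"
  proof -
    have h1: "poly (smult ((K + a/2) * (1 + a) * b * c) [:a/2, 1:] * Qhat (Suc j) a b c) x = poly (Num j a b c) x"
      using arg_cong[OF raising[OF a b c, of j], of "\<lambda>p. poly p x"] unfolding K_def .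
    have h2: "poly (Qhat j (a+1) (b+1) (c+1)) (x - 1) = Q0" unfolding Q0_def x_def by simp
    from h1 show ?thesis unfolding poly_Num h2 poly_mult poly_smult Qk_def[symmetric] Q1_def[symmetric] K_def[symmetric]
      by (simp add: algebra_simps)
  qed
  have e1: "1 + (a + 1) - (b + 1) = 1 + a - b" "1 + (a + 1) - (c + 1) = 1 + a - c" by simp_all
  have Au: "Acoef a b c (Suc m) = A0 * ((a + M) * (b + M) * (c + M) / ((M + 1) * (1 + a - b + M) * (1 + a - c + M)))"
    unfolding A0_def M_def by (rule A_Suc)
  have Av0: "Acoef (a+1) (b+1) (c+1) m = A0 * ((a + M) * (b + M) * (c + M) / (a * b * c))"
    unfolding A0_def M_def by (rule A_shift[OF a0 b0 c0])
  have Av1: "Acoef (a+1) (b+1) (c+1) (Suc m) = A0 * ((a + M) * (b + M) * (c + M) / (a * b * c))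
      * ((a + 1 + M) * (b + 1 + M) * (c + 1 + M) / ((M + 1) * (1 + a - b + M) * (1 + a - c + M)))"
    unfolding A_Suc[of "a+1"] Av0 e1 M_def ..
  define \<Phi> where "\<Phi> = A0 * (a + M) * (b + M) * (c + M) / ((M + 1) * (1 + a - b + M) * (1 + a - c + M) * a * b * c * (a + 1))"
  have invs: "inverse a * a = 1" "inverse b * b = 1" "inverse c * c = 1" "inverse (a + 1) * (a + 1) = 1"
     "inverse (M + 1) * (M + 1) = 1" "inverse (1 + a - b + M) * (1 + a - b + M) = 1" "inverse (1 + a - c + M) * (1 + a - c + M) = 1"
    using a0 b0 c0 a1 g0 d0 m0 by auto
  have L: "\<alpha> * UU (Suc j) a b c $ Suc m = \<Phi> * (\<alpha> * b * c * (a + 1) * (a + 2 * x) * Qk)"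
    unfolding UU_def fps_nth_Abs_fps Au \<Phi>_def Qk_def x_def[symmetric] xM divide_inverse inverse_mult_distrib
    using invs by algebra
  have R1: "(\<alpha> + of_nat (Suc m)) * V $ Suc m = \<Phi> * ((\<alpha> + x) * (a + x) * (b + x) * (c + x) * (a + 1 + 2 * x) * Q1)"
    unfolding V_def UU_def fps_nth_Abs_fps Av1 \<Phi>_def Q1_def x_def[symmetric] xM divide_inverse inverse_mult_distrib
    using invs by algebra
  have R0: "(\<beta> + of_nat m) * V $ m = \<Phi> * ((\<beta> + M) * (M + 1) * (1 + a - b + M) * (1 + a - c + M) * (a + 1 + 2 * M) * Q0)"
    unfolding V_def UU_def fps_nth_Abs_fps Av0 \<Phi>_def Q0_def M_def[symmetric] divide_inverse inverse_mult_distrib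
    using invs by algebra
  have core: "\<alpha> * b * c * (a + 1) * (a + 2 * x) * Qk = (\<alpha> + x) * (a + x) * (b + x) * (c + x) * (a + 1 + 2 * x) * Q1
     + (\<beta> + M) * (M + 1) * (1 + a - b + M) * (1 + a - c + M) * (a + 1 + 2 * M) * Q0"
  proof -
    have "2 * ((K + a/2) * (1 + a) * b * c * (a/2 + x) * Qk) = 2 * ((x + K + a/2) * (x + a) * (x + b) * (x + c) * (x + 1/2 + a/2) * Q1
   + (x - K + a/2) * x * (x + a - b) * (x + a - c) * (x - 1/2 + a/2) * Q0)" using R by simp
    then show ?thesis unfolding \<alpha>_def \<beta>_def K_def[symmetric] xM by (simp add: algebra_simps)
  qed
  show ?thesis unfolding L R1 R0 core by (simp add: algebra_simps)
qed

lemma UU_coeff_0: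
  fixes a b c :: complex and j :: nat
  assumes a: "a \<notin> \<int>" and b: "b \<notin> \<int>" and c: "c \<notin> \<int>"
  shows "UU (Suc j) a b c $ 0 = UU j (a+1) (b+1) (c+1) $ 0"
proof -
  define K where "K = (of_nat (Suc j) :: complex)"
  have h1: "poly (smult ((K + a/2) * (1 + a) * b * c) [:a/2, 1:] * Qhat (Suc j) a b c) 0 = poly (Num j a b c) 0"
    using arg_cong[OF raising[OF a b c, of j], of "\<lambda>p. poly p 0"] unfolding K_def .
  have C0: "(K + a/2) * (1 + a) * b * c * (a/2) \<noteq> 0" using a b c notint_half_plus_nat[OF a, of "Suc j"] notint_1plus[OF a]
    unfolding K_def by auto
  from h1 have "(K + a/2) * (1 + a) * b * c * (a/2) * (poly (Qhat (Suc j) a b c) 0 - poly (Qhat j (a+1) (b+1) (c+1)) 0) = 0"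
    unfolding poly_Num poly_mult poly_smult K_def[symmetric] by simp algebra
  then show ?thesis using C0 unfolding UU_def Acoef_def by simp
qed

lemma UU_Suc:
  fixes a b c :: complex and j :: nat
  assumes a: "a \<notin> \<int>" and b: "b \<notin> \<int>" and c: "c \<notin> \<int>" and ab: "a - b \<notin> \<int>" and ac: "a - c \<notin> \<int>"
  defines "\<alpha> \<equiv> of_nat (Suc j) + a/2" and "\<beta> \<equiv> 1 + a/2 - of_nat (Suc j)"
  defines "V \<equiv> UU j (a+1) (b+1) (c+1)"
  shows "fps_const \<alpha> * UU (Suc j) a b c = (fps_const \<alpha> + fps_const \<beta> * fps_X) * V + fps_X * ((1 + fps_X) * fps_deriv V)"
proof (rule fps_ext)
  fix n
  have r: "((fps_const \<alpha> + fps_const \<beta> * fps_X) * V + fps_X * ((1 + fps_X) * fps_deriv V)) $ n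
     = (\<alpha> + of_nat n) * V $ n + (if n = 0 then 0 else (\<beta> + of_nat n - 1) * V $ (n - 1))"
  proof -
    have "(fps_const \<alpha> + fps_const \<beta> * fps_X) * V + fps_X * ((1 + fps_X) * fps_deriv V)
       = fps_const \<alpha> * V + fps_X * (fps_const \<beta> * V) + fps_X * fps_deriv V + fps_X * (fps_X * fps_deriv V)"
      by (simp add: algebra_simps)
    then show ?thesis
      by (cases n) (simp_all add: fps_X_mult_nth X_deriv_nth algebra_simps)
  qed
  show "(fps_const \<alpha> * UU (Suc j) a b c) $ n = ((fps_const \<alpha> + fps_const \<beta> * fps_X) * V + fps_X * ((1 + fps_X) * fps_deriv V)) $ n"
  proof (cases n)
    case 0
    then show ?thesis unfolding r using UU_coeff_0[OF a b c, of j] unfolding V_def by simp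
  next
    case (Suc m)
    have "(\<beta> + of_nat (Suc m) - 1) = \<beta> + of_nat m" by simp
    then show ?thesis unfolding r using UU_coeff_Suc[OF a b c ab ac, of j m] unfolding V_def \<alpha>_def \<beta>_def Suc
      by simp
  qed
qed

abbreviation B :: "complex \<Rightarrow> complex fps" where "B s \<equiv> fps_binomial s"

definition Bm :: "complex \<Rightarrow> complex fps" where "Bm s = fps_compose (fps_binomial s) (- fps_X)"

definition Zs :: "complex fps" where "Zs = fps_const (-4) * fps_X * Bm (-2)"

lemma Bm_add: "Bm (s + t) = Bm s * Bm t"
  unfolding Bm_def fps_binomial_add_mult by (rule fps_compose_mult_distrib) simp

lemma Bm_0 [simp]: "Bm 0 = 1" unfolding Bm_def by simp

lemma Bm_1: "Bm 1 = 1 - fps_X"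
  unfolding Bm_def fps_binomial_1 by (simp add: fps_compose_add_distrib)

lemma B_deriv: "fps_deriv (B s) = fps_const s * B (s - 1)"
proof (rule fps_ext)
  fix n show "fps_deriv (B s) $ n = (fps_const s * B (s - 1)) $ n"
    using gbinomial_absorption[of n s] by simp
qed

lemma Bm_deriv: "fps_deriv (Bm s) = - fps_const s * Bm (s - 1)"
proof -
  have "fps_deriv (Bm s) = (fps_deriv (B s) oo - fps_X) * fps_deriv (- fps_X)"
    unfolding Bm_def by (rule fps_compose_deriv) simp
  also have "fps_deriv (B s) oo - fps_X = fps_const s * Bm (s - 1)"
    unfolding B_deriv Bm_def by (rule fps_const_mult_apply_left[symmetric])
  finally show ?thesis by (metis minus_mult_left fps_deriv_neg fps_deriv_fps_X mult.right_neutral mult_minus_right)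
qed

lemma Bm_nth: "Bm s $ n = pochhammer (- s) n / fact n"
  unfolding Bm_def fps_compose_uminus' by (simp add: gbinomial_pochhammer)

lemma Bm_pow: "Bm s ^ n = Bm (of_nat n * s)"
proof (induction n)
  case 0 then show ?case by simp
next
  case (Suc n)
  have "Bm s ^ Suc n = Bm s * Bm (of_nat n * s)" using Suc by simp
  also have "\<dots> = Bm (s + of_nat n * s)" by (simp only: Bm_add)
  also have "s + of_nat n * s = of_nat (Suc n) * s" by (simp add: algebra_simps)
  finally show ?case .
qed

lemma B_inv1: "B (-1) * (1 + fps_X) = 1"
  using fps_binomial_add_mult[of "-1" 1] by (simp add: fps_binomial_1)

lemma Zs0: "Zs $ 0 = 0" unfolding Zs_def by simp

lemma Bm_m2: "Bm (-2) = (1 - fps_X) * Bm (-3)"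
  using Bm_add[of 1 "-3"] by (simp add: Bm_1)

lemma Zs_deriv: "fps_deriv Zs = fps_const (-4) * (1 + fps_X) * Bm (-3)"
proof -
  have "fps_deriv Zs = fps_const (-4) * Bm (-2) + fps_const (-4) * fps_X * (fps_const 2 * Bm (-3))"
    unfolding Zs_def by (simp add: Bm_deriv algebra_simps)
  also have "\<dots> = fps_const (-4) * (1 + fps_X) * Bm (-3)"
    unfolding Bm_m2 by (simp add: algebra_simps)
  finally show ?thesis .
qed

lemma Zs_key: "(1 + fps_X) * Zs = fps_X * (1 - fps_X) * fps_deriv Zs"
proof -
  have z: "Zs = fps_const (-4) * fps_X * (1 - fps_X) * Bm (-3)" unfolding Zs_def Bm_m2 by (simp add: algebra_simps)
  show ?thesis unfolding Zs_deriv unfolding z by (simp add: algebra_simps)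
qed

lemma scalar_id:
  fixes K a :: complex
  shows "fps_const (K + a/2) * (1 + fps_X)^2 + fps_X * (fps_const (1 - 2*K) * (1 - fps_X) - fps_const (2*K + a) * (1 + fps_X))
     = (1 - fps_X) * (fps_const (K + a/2) + fps_const (1 + a/2 - K) * fps_X)"
proof -
  have e: "fps_const (K + a/2) = fps_const K + fps_const (a/2)" "fps_const (1 - 2*K) = 1 - 2 * fps_const K"
    "fps_const (2*K + a) = 2 * fps_const K + 2 * fps_const (a/2)" "fps_const (1 + a/2 - K) = 1 + fps_const (a/2) - fps_const K"
    by (simp_all add: fps_eq_iff fps_numeral_nth)
  show ?thesis unfolding e by (simp add: algebra_simps power2_eq_square)
qed

lemma step_fps:
  fixes a b c :: complex and j :: nat
  assumes a: "a \<notin> \<int>" and b: "b \<notin> \<int>" and c: "c \<notin> \<int>" and ab: "a - b \<notin> \<int>" and ac: "a - c \<notin> \<int>"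
  assumes IH: "HH j (a+1) (b+1) (c+1) oo Zs = B (-1 - 2 * of_nat j) * Bm (1 + 2 * of_nat j + (a+1)) * UU j (a+1) (b+1) (c+1)"
  shows "HH (Suc j) a b c oo Zs = B (-1 - 2 * of_nat (Suc j)) * Bm (1 + 2 * of_nat (Suc j) + a) * UU (Suc j) a b c"
proof -
  define K where "K = (of_nat (Suc j) :: complex)"
  define \<alpha> where "\<alpha> = K + a/2"
  define \<beta> where "\<beta> = 1 + a/2 - K"
  define H' where "H' = HH j (a+1) (b+1) (c+1)"
  define V where "V = UU j (a+1) (b+1) (c+1)"
  define U where "U = UU (Suc j) a b c"
  define G where "G = H' oo Zs"
  define C where "C = fps_deriv H' oo Zs"
  define P where "P = B (-2*K)"
  define Q where "Q = Bm (2*K + a - 1)"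
  have \<alpha>0: "\<alpha> \<noteq> 0" unfolding \<alpha>_def K_def using notint_half_plus_nat[OF a] .
  have Eq1: "HH (Suc j) a b c oo Zs = G + fps_const (1/\<alpha>) * (Zs * C)"
    unfolding HH_Suc[OF \<alpha>0[unfolded \<alpha>_def K_def]] G_def C_def H'_def \<alpha>_def K_def
    by (simp add: fps_compose_add_distrib fps_const_mult_apply_left[symmetric] fps_compose_mult_distrib[OF Zs0] fps_X_fps_compose_startby0[OF Zs0])
  have Eq2: "fps_deriv G = C * fps_deriv Zs" unfolding G_def C_def by (rule fps_compose_deriv[OF Zs0])
  have Eq3: "(1 + fps_X) * (Zs * C) = fps_X * (1 - fps_X) * fps_deriv G"
    unfolding Eq2 using Zs_key by (metis mult.assoc mult.commute)
  have IH': "G = B (1 - 2*K) * Bm (2*K + a) * V"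
  proof -
    have e1: "-1 - 2 * of_nat j = 1 - 2*K" and e2: "1 + 2 * of_nat j + (a+1) = 2*K + a" unfolding K_def by (simp_all add: algebra_simps)
    show ?thesis using IH unfolding G_def H'_def V_def e1 e2 .
  qed
  have eB1: "B (1 - 2*K) = P * (1 + fps_X)" unfolding P_def using fps_binomial_add_mult[of "-2*K" 1] by (simp add: fps_binomial_1)
  have eB0: "B (-2*K) = P" unfolding P_def ..
  have eQ1: "Bm (2*K + a) = Q * (1 - fps_X)" unfolding Q_def using Bm_add[of "2*K + a - 1" 1] by (simp add: Bm_1)
  have h2: "Bm (1 + 2*K + a) = Bm (2*K + a) * (1 - fps_X)"
  proof -
    have e: "1 + 2*K + a = (2*K + a) + 1" by simp
    show ?thesis unfolding e Bm_add Bm_1 ..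
  qed
  have eQ2: "Bm (1 + 2*K + a) = Q * (1 - fps_X)^2" unfolding h2 eQ1 by (simp add: power2_eq_square mult.assoc)
  have eBm1: "B (-1 - 2*K) = P * B (-1)" unfolding P_def using fps_binomial_add_mult[of "-2*K" "-1"] by (simp add: algebra_simps)
  have dG: "fps_deriv G = fps_const (1 - 2*K) * P * Q * (1 - fps_X) * V - fps_const (2*K + a) * P * (1 + fps_X) * Q * V
      + P * (1 + fps_X) * Q * (1 - fps_X) * fps_deriv V"
  proof -
    have "fps_deriv G = fps_deriv (B (1 - 2*K)) * Bm (2*K + a) * V + B (1 - 2*K) * fps_deriv (Bm (2*K + a)) * V
       + B (1 - 2*K) * Bm (2*K + a) * fps_deriv V"
      unfolding IH' by (simp add: algebra_simps)
    also have "\<dots> = fps_const (1 - 2*K) * B (-2*K) * Bm (2*K + a) * V + B (1 - 2*K) * (- fps_const (2*K+a) * Bm (2*K + a - 1)) * V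
       + B (1 - 2*K) * Bm (2*K + a) * fps_deriv V"
    proof -
      have e: "B ((1 - 2*K) - 1) = B (-2*K)" by simp
      show ?thesis unfolding B_deriv Bm_deriv e ..
    qed
    finally show ?thesis unfolding eB1 eQ1 eB0 Q_def[symmetric] by algebra
  qed
  have UU': "fps_const \<alpha> * U = (fps_const \<alpha> + fps_const \<beta> * fps_X) * V + fps_X * ((1 + fps_X) * fps_deriv V)"
    unfolding U_def V_def \<alpha>_def \<beta>_def K_def by (rule UU_Suc[OF a b c ab ac])
  have S: "fps_const \<alpha> * (1 + fps_X)^2 + fps_X * (fps_const (1 - 2*K) * (1 - fps_X) - fps_const (2*K + a) * (1 + fps_X))
     = (1 - fps_X) * (fps_const \<alpha> + fps_const \<beta> * fps_X)"
    unfolding \<alpha>_def \<beta>_def by (rule scalar_id)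
  have inv\<alpha>: "fps_const \<alpha> * fps_const (1/\<alpha>) = 1" using \<alpha>0 by simp
  have main: "(1 + fps_X) * fps_const \<alpha> * (HH (Suc j) a b c oo Zs)
     = (1 + fps_X) * fps_const \<alpha> * (P * B (-1) * (Q * (1 - fps_X)^2) * U)"
  proof -
    have l: "(1 + fps_X) * fps_const \<alpha> * (HH (Suc j) a b c oo Zs) = fps_const \<alpha> * (1 + fps_X) * G + fps_X * (1 - fps_X) * fps_deriv G"
      unfolding Eq1 using Eq3 inv\<alpha> by (simp add: algebra_simps)
    have r: "(1 + fps_X) * fps_const \<alpha> * (P * B (-1) * (Q * (1 - fps_X)^2) * U) = P * Q * (1 - fps_X)^2 * (fps_const \<alpha> * U)"
      using B_inv1 by algebra
    have e: "fps_const \<alpha> = fps_const K + fps_const (a/2)" "fps_const (1 - 2*K) = 1 - 2 * fps_const K"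
      "fps_const (2*K + a) = 2 * fps_const K + 2 * fps_const (a/2)" "fps_const \<beta> = 1 + fps_const (a/2) - fps_const K"
      unfolding \<alpha>_def \<beta>_def by (simp_all add: fps_eq_iff fps_numeral_nth)
    show ?thesis unfolding l r unfolding UU' dG unfolding IH' eB1 eQ1 unfolding e by algebra
  qed
  have nz: "(1 + fps_X) * fps_const \<alpha> \<noteq> (0 :: complex fps)"
  proof -
    have "(1 + fps_X :: complex fps) \<noteq> 0" by (metis fps_nonzeroI fps_one_nth fps_add_nth fps_X_nth add.right_neutral one_neq_zero)
    then show ?thesis using \<alpha>0 by simp
  qed
  have "HH (Suc j) a b c oo Zs = P * B (-1) * (Q * (1 - fps_X)^2) * U"
    using main nz by (simp only: mult_cancel_left) simp
  then show ?thesis unfolding K_def[symmetric] U_def[symmetric] eBm1 eQ2 by (simp add: algebra_simps)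
qed

lemma ratio_bound:
  fixes \<alpha> \<beta> :: complex
  assumes nz: "\<forall>m. \<beta> + of_nat m \<noteq> 0"
  shows "\<exists>K>0. \<forall>m. norm (\<alpha> + of_nat m) \<le> K * norm (\<beta> + of_nat m)"
proof -
  define M where "M = nat \<lceil>norm \<beta>\<rceil> + 1"
  define K where "K = (1 + norm (\<alpha> - \<beta>)) + (\<Sum>m<M. norm (\<alpha> + of_nat m) / norm (\<beta> + of_nat m))"
  have K0: "K > 0" unfolding K_def by (intro add_pos_nonneg sum_nonneg) auto
  have "norm (\<alpha> + of_nat m) \<le> K * norm (\<beta> + of_nat m)" for m
  proof (cases "m < M")
    case True
    have nb: "norm (\<beta> + of_nat m) > 0" using nz by auto
    have "norm (\<alpha> + of_nat m) / norm (\<beta> + of_nat m) \<le> (\<Sum>m<M. norm (\<alpha> + of_nat m) / norm (\<beta> + of_nat m))"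
      by (rule member_le_sum) (use True in auto)
    also have "\<dots> \<le> K" unfolding K_def by simp
    finally show ?thesis using nb by (simp add: divide_le_eq)
  next
    case False
    have "real m \<ge> norm \<beta> + 1" using False unfolding M_def by linarith
    moreover have "norm (\<beta> + of_nat m) \<ge> real m - norm \<beta>"
      using norm_triangle_ineq2[of "of_nat m" "- \<beta>"] by (simp add: add.commute)
    ultimately have b1: "norm (\<beta> + of_nat m) \<ge> 1" by linarith
    have "norm (\<alpha> + of_nat m) \<le> norm (\<alpha> - \<beta>) + norm (\<beta> + of_nat m)"
      using norm_triangle_ineq[of "\<alpha> - \<beta>" "\<beta> + of_nat m"] by simp
    also have "\<dots> \<le> norm (\<alpha> - \<beta>) * norm (\<beta> + of_nat m) + norm (\<beta> + of_nat m)"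
      using b1 by (simp add: mult_left_mono[of 1 _ "norm (\<alpha> - \<beta>)", simplified])
    also have "\<dots> = (1 + norm (\<alpha> - \<beta>)) * norm (\<beta> + of_nat m)" by (simp add: algebra_simps)
    also have "\<dots> \<le> K * norm (\<beta> + of_nat m)"
      unfolding K_def by (intro mult_right_mono) (auto intro!: sum_nonneg)
    finally show ?thesis .
  qed
  with K0 show ?thesis by blast
qed

lemma Hs_radius:
  fixes a1 a2 a3 b1 b2 :: complex
  assumes b1: "\<forall>m. b1 + of_nat m \<noteq> 0" and b2: "\<forall>m. b2 + of_nat m \<noteq> 0"
  shows "fps_conv_radius (Hs a1 a2 a3 b1 b2) > 0"
proof -
  obtain K1 where K1: "K1 > 0" "\<forall>m. norm (a1 + of_nat m) \<le> K1 * norm (b1 + of_nat m)" using ratio_bound[OF b1] by blast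
  obtain K2 where K2: "K2 > 0" "\<forall>m. norm (a2 + of_nat m) \<le> K2 * norm (b2 + of_nat m)" using ratio_bound[OF b2] by blast
  have one: "\<forall>m. (1::complex) + of_nat m \<noteq> 0" by (metis of_nat_Suc of_nat_neq_0)
  obtain K3 where K3: "K3 > 0" "\<forall>m. norm (a3 + of_nat m) \<le> K3 * norm (1 + of_nat m :: complex)" using ratio_bound[OF one] by blast
  define C where "C = K1 * K2 * K3"
  have C0: "C > 0" unfolding C_def using K1 K2 K3 by simp
  define t where "t = fps_nth (Hs a1 a2 a3 b1 b2)"
  have tS: "t (Suc n) = t n * ((a1 + of_nat n) * (a2 + of_nat n) * (a3 + of_nat n) / ((b1 + of_nat n) * (b2 + of_nat n) * (1 + of_nat n)))" for n
  proof -
    have e: "of_nat (Suc n) = (1 + of_nat n :: complex)" by simp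
    show ?thesis unfolding t_def Hs_def fps_nth_Abs_fps pochhammer_Suc fact_Suc e
      by (simp only: times_divide_times_eq mult_ac)
  qed
  have rat: "norm ((a1 + of_nat n) * (a2 + of_nat n) * (a3 + of_nat n) / ((b1 + of_nat n) * (b2 + of_nat n) * (1 + of_nat n))) \<le> C" for n
  proof -
    have nb: "norm (b1 + of_nat n) > 0" "norm (b2 + of_nat n) > 0" "norm (1 + of_nat n :: complex) > 0" using b1 b2 one by auto
    have "norm ((a1 + of_nat n) * (a2 + of_nat n) * (a3 + of_nat n)) \<le> (K1 * norm (b1 + of_nat n)) * (K2 * norm (b2 + of_nat n)) * (K3 * norm (1 + of_nat n :: complex))"
      unfolding norm_mult using K1 K2 K3 by (intro mult_mono) auto
    also have "\<dots> = C * norm ((b1 + of_nat n) * (b2 + of_nat n) * (1 + of_nat n))" unfolding C_def norm_mult by (simp add: algebra_simps)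
    finally show ?thesis using nb by (simp add: norm_divide divide_le_eq)
  qed
  have tb: "norm (t n) \<le> C ^ n" for n
  proof (induction n)
    case 0 then show ?case unfolding t_def Hs_def by simp
  next
    case (Suc n)
    have "norm (t (Suc n)) \<le> norm (t n) * C" unfolding tS norm_mult by (intro mult_left_mono rat) auto
    also have "\<dots> \<le> C ^ n * C" using Suc C0 by (intro mult_right_mono) auto
    finally show ?case by (simp add: mult.commute)
  qed
  define z where "z = complex_of_real (1 / (2 * C))"
  have nz: "norm z = 1 / (2 * C)" unfolding z_def norm_of_real using C0 by simp
  have "summable (\<lambda>n. t n * z ^ n)"
  proof (rule summable_comparison_test[of _ "\<lambda>n. (1/2::real) ^ n"])
    show "\<exists>N. \<forall>n\<ge>N. norm (t n * z ^ n) \<le> (1/2) ^ n"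
    proof (intro exI allI impI)
      fix n :: nat
      have "norm (t n * z ^ n) \<le> C ^ n * (1 / (2 * C)) ^ n" unfolding norm_mult norm_power nz
        using tb C0 by (intro mult_right_mono) auto
      also have "\<dots> = (1/2) ^ n" using C0 by (simp add: power_mult_distrib[symmetric])
      finally show "norm (t n * z ^ n) \<le> (1/2) ^ n" .
    qed
  qed simp
  then have "conv_radius t \<ge> norm z" by (rule conv_radius_geI)
  then show ?thesis unfolding fps_conv_radius_def t_def[symmetric] nz using C0
    by (metis ereal_less(2) order.strict_trans2 zero_less_divide_1_iff zero_less_mult_iff zero_less_numeral)
qed

lemma neg_poch_fact:
  assumes "i \<le> n"
  shows "pochhammer (- of_nat n :: complex) i * fact (n - i) = (-1)^i * fact n"
proof -
  have "pochhammer (- of_nat n :: complex) i = (-1)^i * pochhammer (of_nat n - of_nat i + 1) i"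
    by (rule pochhammer_minus)
  moreover have "(of_nat n - of_nat i + 1 :: complex) = 1 + of_nat (n - i)" using assms by (simp add: of_nat_diff)
  moreover have "fact n = (fact (n - i) :: complex) * pochhammer (1 + of_nat (n - i)) i"
  proof -
    have "fact n = (pochhammer 1 ((n - i) + i) :: complex)" using assms by (simp add: pochhammer_fact)
    also have "\<dots> = pochhammer 1 (n - i) * pochhammer (1 + of_nat (n - i)) i" by (rule pochhammer_product')
    finally show ?thesis by (simp add: pochhammer_fact)
  qed
  ultimately show ?thesis by (simp add: algebra_simps)
qed

lemma e_coeff:
  fixes a :: complex
  shows "a * pochhammer (1 + a) (2*i) * (pochhammer (1 + a + 2 * of_nat i) j / fact j
      + (if j = 0 then 0 else pochhammer (1 + a + 2 * of_nat i) (j - 1) / fact (j - 1)))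
   = pochhammer a (2*i + j) * (a + 2 * of_nat i + 2 * of_nat j) / fact j"
proof (cases j)
  case 0
  have "a * pochhammer (1 + a) (2*i) = pochhammer a (2*i) * (a + 2 * of_nat i)"
    using poch_shift[of a "2*i"] by (simp add: add.commute)
  then show ?thesis using 0 by simp
next
  case (Suc m)
  have p1: "a * pochhammer (1 + a) (2*i) = pochhammer a (Suc (2*i))" by (simp add: pochhammer_rec add.commute)
  have p2: "pochhammer a (Suc (2*i)) * pochhammer (1 + a + 2 * of_nat i) m = pochhammer a (2*i + Suc m)"
  proof -
    have e: "a + of_nat (Suc (2*i)) = 1 + a + 2 * of_nat i" by simp
    have "pochhammer a (Suc (2*i) + m) = pochhammer a (Suc (2*i)) * pochhammer (1 + a + 2 * of_nat i) m"
      using pochhammer_product'[of a "Suc (2*i)" m] unfolding e .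
    moreover have "Suc (2*i) + m = 2*i + Suc m" by simp
    ultimately show ?thesis by simp
  qed
  have "pochhammer (1 + a + 2 * of_nat i) (Suc m) / fact (Suc m) + pochhammer (1 + a + 2 * of_nat i) m / fact m
     = pochhammer (1 + a + 2 * of_nat i) m * (a + 2 * of_nat i + 2 * of_nat (Suc m)) / fact (Suc m)"
  proof -
    have h: "inverse (fact m) * fact m = (1::complex)" "inverse (of_nat m + 1) * (of_nat m + 1 :: complex) = 1"
      by simp (metis of_nat_Suc of_nat_neq_0 add.commute left_inverse)
    show ?thesis unfolding pochhammer_Suc fact_Suc of_nat_mult of_nat_Suc divide_inverse inverse_mult_distrib
      using h by algebra
  qed
  then have "a * pochhammer (1 + a) (2*i) * (pochhammer (1 + a + 2 * of_nat i) j / fact j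
      + (if j = 0 then 0 else pochhammer (1 + a + 2 * of_nat i) (j - 1) / fact (j - 1)))
     = (a * pochhammer (1 + a) (2*i) * pochhammer (1 + a + 2 * of_nat i) m) * (a + 2 * of_nat i + 2 * of_nat (Suc m)) / fact (Suc m)"
    unfolding Suc by (simp only: diff_Suc_1 if_False nat.simps) (simp add: mult.assoc)
  also have "a * pochhammer (1 + a) (2*i) * pochhammer (1 + a + 2 * of_nat i) m = pochhammer a (2*i + j)"
    unfolding p1 Suc p2 ..
  finally show ?thesis unfolding Suc .
qed

definition Ecoef :: "complex \<Rightarrow> nat \<Rightarrow> nat \<Rightarrow> complex" where
  "Ecoef a i j = pochhammer (1 + a + 2 * of_nat i) j / fact j
      + (if j = 0 then 0 else pochhammer (1 + a + 2 * of_nat i) (j - 1) / fact (j - 1))"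

lemma abs_alg:
  fixes X1 X2 m4 s P2 a E PA PAn w IFni Pm Fni Fn IA IFn Pe Ig Id If :: complex
  assumes "X1 * X2 * m4 = s * P2" "a * P2 * E = PA * PAn * w * IFni" "Pm * Fni = s * Fn"
    "IA * a = 1" "IFn * Fn = 1" "IFni * Fni = 1"
  shows "X1 * X2 * Pe * (Ig * Id * If) * m4 * E = w * IA * PA * IFn * (Pm * PAn * Pe * (Ig * Id * If))"
  using assms by algebra

lemma term_id:
  fixes a b c :: complex and i n :: nat
  assumes a0: "a \<noteq> 0" and "i \<le> n"
  shows "fps_nth (HH 0 a b c) i * (-4)^i * Ecoef a i (n - i) = (a + 2 * of_nat n) / a * pochhammer a n / fact n * sS a b c n i"
proof -
  have d: "pochhammer (1/2 + a/2) i * pochhammer (1 + a/2) i * (-4)^i = (-1)^i * pochhammer (1+a) (2*i)"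
  proof -
    have "pochhammer (2 * ((1+a)/2)) (2*i) = of_nat (2^(2*i)) * pochhammer ((1+a)/2) i * pochhammer ((1+a)/2 + 1/2) i"
      by (rule pochhammer_double)
    moreover have "2 * ((1+a)/2) = 1 + a" "(1+a)/2 = 1/2 + a/2" "(1+a)/2 + 1/2 = 1 + a/2" by (simp_all add: field_simps)
    moreover have "(of_nat (2^(2*i)) :: complex) = 4^i" by (simp add: power_mult)
    moreover have "(-4::complex)^i = (-1)^i * 4^i" by (metis mult_minus1 power_mult_distrib)
    ultimately show ?thesis by (simp add: algebra_simps)
  qed
  have ec: "a * pochhammer (1 + a) (2*i) * Ecoef a i (n - i) = pochhammer a (n + i) * (a + 2 * of_nat n) / fact (n - i)"
  proof -
    have "a * pochhammer (1 + a) (2*i) * Ecoef a i (n - i) = pochhammer a (2*i + (n - i)) * (a + 2 * of_nat i + 2 * of_nat (n - i)) / fact (n - i)"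
      unfolding Ecoef_def by (rule e_coeff)
    moreover have "2*i + (n - i) = n + i" using assms(2) by simp
    moreover have "a + 2 * of_nat i + 2 * of_nat (n - i) = a + 2 * of_nat n" using assms(2) by (simp add: of_nat_diff algebra_simps)
    ultimately show ?thesis by simp
  qed
  have pp: "pochhammer a (n + i) = pochhammer a n * pochhammer (a + of_nat n) i" by (rule pochhammer_product')
  have nf: "pochhammer (- of_nat n) i * fact (n - i) = (-1)^i * (fact n :: complex)" by (rule neg_poch_fact[OF assms(2)])
  have h: "inverse a * a = 1" "inverse (fact n) * fact n = (1::complex)" "inverse (fact (n - i)) * fact (n - i) = (1::complex)"
    using a0 by simp_all
  have H0: "fps_nth (HH 0 a b c) i = pochhammer (1/2 + a/2) i * pochhammer (1 + a/2) i * pochhammer (1 + a - b - c) i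
      / (pochhammer (1 + a - b) i * pochhammer (1 + a - c) i * fact i)"
    unfolding HH_def Hs_def by simp
  show ?thesis unfolding H0 sS_def divide_inverse inverse_mult_distrib
    by (rule abs_alg[OF d[unfolded divide_inverse] ec[unfolded pp divide_inverse] nf h])
qed

lemma Zs_pow: "Zs ^ i = fps_const ((-4)^i) * (fps_X ^ i * Bm (- 2 * of_nat i))"
proof -
  have "Zs ^ i = fps_const (-4) ^ i * fps_X ^ i * Bm (-2) ^ i" unfolding Zs_def by (simp add: power_mult_distrib)
  also have "Bm (-2) ^ i = Bm (- 2 * of_nat i)" unfolding Bm_pow by (simp add: algebra_simps)
  finally show ?thesis by (simp add: fps_const_power mult.assoc)
qed

lemma Zs_pow_low: "m < i \<Longrightarrow> fps_nth (Zs ^ i) m = 0"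
  unfolding Zs_pow by (simp add: fps_X_power_mult_nth)

lemma onePX_nth: "fps_nth ((1 + fps_X) * (F :: complex fps)) j = fps_nth F j + (if j = 0 then 0 else fps_nth F (j - 1))"
proof -
  have "(1 + fps_X) * F = F + fps_X * F" by (simp add: distrib_right)
  then show ?thesis by (simp add: fps_X_mult_nth)
qed

lemma ZsM_nth:
  assumes "i \<le> n"
  shows "fps_nth (Zs ^ i * (B 1 * Bm (-1 - a))) n = (-4)^i * Ecoef a i (n - i)"
proof -
  have "Zs ^ i * (B 1 * Bm (-1 - a)) = fps_const ((-4)^i) * (fps_X ^ i * ((1 + fps_X) * Bm (- 2 * of_nat i + (-1 - a))))"
    unfolding Zs_pow Bm_add fps_binomial_1 by (simp add: algebra_simps)
  moreover have "- 2 * of_nat i + (-1 - a) = - (1 + a + 2 * of_nat i)" by simp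
  ultimately have "Zs ^ i * (B 1 * Bm (-1 - a)) = fps_const ((-4)^i) * (fps_X ^ i * ((1 + fps_X) * Bm (- (1 + a + 2 * of_nat i))))"
    by metis
  moreover have "fps_nth (Bm (- (1 + a + 2 * of_nat i))) j = pochhammer (1 + a + 2 * of_nat i) j / fact j" for j
    by (simp only: Bm_nth minus_minus)
  ultimately show ?thesis using assms
    by (simp add: fps_X_power_mult_nth onePX_nth Ecoef_def del: Bm_nth)
qed

lemma compose_mult_nth:
  fixes M H :: "complex fps"
  shows "fps_nth (M * (H oo Zs)) n = (\<Sum>i=0..n. fps_nth H i * fps_nth (Zs ^ i * M) n)"
proof -
  have "fps_nth (M * (H oo Zs)) n = fps_nth ((H oo Zs) * M) n" by (simp add: mult.commute)
  also have "\<dots> = (\<Sum>m=0..n. fps_nth (H oo Zs) m * fps_nth M (n - m))"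
    by (rule fps_mult_nth)
  also have "\<dots> = (\<Sum>m=0..n. \<Sum>i=0..n. fps_nth H i * fps_nth (Zs ^ i) m * fps_nth M (n - m))"
  proof (rule sum.cong[OF refl])
    fix m assume m: "m \<in> {0..n}"
    have "fps_nth (H oo Zs) m * fps_nth M (n - m) = (\<Sum>i=0..m. fps_nth H i * fps_nth (Zs ^ i) m * fps_nth M (n - m))"
      by (simp add: fps_compose_nth sum_distrib_right)
    also have "\<dots> = (\<Sum>i=0..n. fps_nth H i * fps_nth (Zs ^ i) m * fps_nth M (n - m))"
      by (rule sum.mono_neutral_left) (use m Zs_pow_low in auto)
    finally show "fps_nth (H oo Zs) m * fps_nth M (n - m) = (\<Sum>i=0..n. fps_nth H i * fps_nth (Zs ^ i) m * fps_nth M (n - m))" .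
  qed
  also have "\<dots> = (\<Sum>i=0..n. \<Sum>m=0..n. fps_nth H i * fps_nth (Zs ^ i) m * fps_nth M (n - m))"
    by (rule sum.swap)
  also have "\<dots> = (\<Sum>i=0..n. fps_nth H i * fps_nth (Zs ^ i * M) n)"
    by (simp add: fps_mult_nth sum_distrib_left mult.assoc)
  finally show ?thesis .
qed

lemma base_coeff:
  fixes a b c :: complex
  assumes a: "a \<notin> \<int>" and ab: "a - b \<notin> \<int>" and ac: "a - c \<notin> \<int>"
  shows "B 1 * Bm (-1 - a) * (HH 0 a b c oo Zs) = UU 0 a b c"
proof (rule fps_ext)
  fix n
  have a0: "a \<noteq> 0" using a by auto
  have "fps_nth (B 1 * Bm (-1 - a) * (HH 0 a b c oo Zs)) n = (\<Sum>i=0..n. fps_nth (HH 0 a b c) i * ((-4)^i * Ecoef a i (n - i)))"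
    unfolding compose_mult_nth by (rule sum.cong[OF refl]) (simp add: ZsM_nth)
  also have "\<dots> = (\<Sum>i=0..n. (a + 2 * of_nat n) / a * pochhammer a n / fact n * sS a b c n i)"
    by (rule sum.cong[OF refl]) (use term_id[OF a0] in \<open>auto simp: mult.assoc\<close>)
  also have "\<dots> = (a + 2 * of_nat n) / a * pochhammer a n / fact n * (\<Sum>i<Suc n. sS a b c n i)"
    by (simp add: sum_distrib_left atLeast0AtMost lessThan_Suc_atMost)
  also have "\<dots> = (a + 2 * of_nat n) / a * pochhammer a n / fact n * (pochhammer b n * pochhammer c n / (pochhammer (1+a-b) n * pochhammer (1+a-c) n))"
    unfolding saal[OF a ab ac] ..
  also have "\<dots> = fps_nth (UU 0 a b c) n"
    unfolding UU_def Acoef_def using a0 by (simp add: field_simps)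
  finally show "fps_nth (B 1 * Bm (-1 - a) * (HH 0 a b c oo Zs)) n = fps_nth (UU 0 a b c) n" .
qed

lemma base_fps:
  fixes a b c :: complex
  assumes a: "a \<notin> \<int>" and ab: "a - b \<notin> \<int>" and ac: "a - c \<notin> \<int>"
  shows "HH 0 a b c oo Zs = B (-1 - 2 * of_nat 0) * Bm (1 + 2 * of_nat 0 + a) * UU 0 a b c"
proof -
  have "B (-1) * Bm (1 + a) * (B 1 * Bm (-1 - a)) = 1"
  proof -
    have "B (-1) * B 1 = 1" using B_inv1 by (simp add: fps_binomial_1)
    moreover have "Bm (1 + a) * Bm (-1 - a) = 1" using Bm_add[of "1+a" "-1-a"] by simp
    ultimately show ?thesis by (metis mult.assoc mult.commute mult.left_neutral)
  qed
  then have "HH 0 a b c oo Zs = B (-1) * Bm (1 + a) * (B 1 * Bm (-1 - a) * (HH 0 a b c oo Zs))"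
    by (metis mult.assoc mult.left_neutral)
  then show ?thesis unfolding base_coeff[OF a ab ac] by simp
qed

lemma main_fps:
  fixes a b c :: complex
  assumes "a \<notin> \<int>" "b \<notin> \<int>" "c \<notin> \<int>" "a - b \<notin> \<int>" "a - c \<notin> \<int>"
  shows "HH k a b c oo Zs = B (-1 - 2 * of_nat k) * Bm (1 + 2 * of_nat k + a) * UU k a b c"
  using assms
proof (induction k arbitrary: a b c)
  case 0
  then show ?case using base_fps by blast
next
  case (Suc k)
  have "HH k (a+1) (b+1) (c+1) oo Zs = B (-1 - 2 * of_nat k) * Bm (1 + 2 * of_nat k + (a+1)) * UU k (a+1) (b+1) (c+1)"
    using Suc.IH[OF notint_add1[OF Suc.prems(1)] notint_add1[OF Suc.prems(2)] notint_add1[OF Suc.prems(3)]] Suc.prems(4,5)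
    by simp
  then show ?case by (rule step_fps[OF Suc.prems])
qed

lemma exp_Bm: "(\<lambda>x::complex. (1 - x) powr s) has_fps_expansion Bm s"
proof -
  have "((\<lambda>x. (1 + x) powr s) \<circ> (\<lambda>x::complex. - x)) has_fps_expansion (fps_binomial s oo - fps_X)"
    by (rule has_fps_expansion_compose) (auto intro!: fps_expansion_intros)
  moreover have "((\<lambda>x. (1 + x) powr s) \<circ> (\<lambda>x::complex. - x)) = (\<lambda>x::complex. (1 - x) powr s)" by (rule ext) simp
  ultimately show ?thesis unfolding Bm_def by simp
qed

lemma exp_Z: "(\<lambda>x::complex. - 4 * x / (1 - x)^2) has_fps_expansion Zs"
proof -
  have "(\<lambda>x::complex. (1 - x)^2) has_fps_expansion (1 - fps_X)^2"
    by (intro fps_expansion_intros)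
  then have "(\<lambda>x::complex. inverse ((1 - x)^2)) has_fps_expansion inverse ((1 - fps_X)^2)"
    by (rule has_fps_expansion_inverse) simp
  moreover have "inverse ((1 - fps_X)^2) = Bm (-2)"
  proof (rule fps_inverse_unique)
    have "Bm 1 * Bm 1 * Bm (-2) = Bm 0" unfolding Bm_add[symmetric] by simp
    then show "(1 - fps_X)^2 * Bm (-2) = 1" by (simp add: Bm_1 power2_eq_square)
  qed
  ultimately have "(\<lambda>x::complex. inverse ((1 - x)^2)) has_fps_expansion Bm (-2)" by simp
  then have "(\<lambda>x::complex. x * inverse ((1 - x)^2)) has_fps_expansion fps_X * Bm (-2)"
    by (intro has_fps_expansion_mult has_fps_expansion_fps_X)
  then have "(\<lambda>x::complex. (- 4) * (x * inverse ((1 - x)^2))) has_fps_expansion fps_const (- 4) * (fps_X * Bm (-2))"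
    by (rule has_fps_expansion_cmult_left)
  moreover have "(\<lambda>x::complex. (- 4) * (x * inverse ((1 - x)^2))) = (\<lambda>x::complex. - 4 * x / (1 - x)^2)"
    by (rule ext) (simp add: divide_inverse)
  ultimately show ?thesis unfolding Zs_def by (simp add: mult.assoc)
qed

lemma analytic_part:
  fixes a b c :: complex and k :: nat
  assumes a: "a \<notin> \<int>" and b: "b \<notin> \<int>" and c: "c \<notin> \<int>" and ab: "a - b \<notin> \<int>" and ac: "a - c \<notin> \<int>"
  shows "\<exists>r>0. \<forall>x::complex. norm x < r \<longrightarrow>
          hyp3F2 (1/2 + of_nat k + a/2) (1 + of_nat k + a/2) (1 - of_nat k + a - b - c)
                 (1 + a - b) (1 + a - c) (- 4 * x / (1 - x)^2)
        = inverse ((1 + x) ^ (1 + 2 * k)) * (1 - x) powr (1 + 2 * of_nat k + a)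
          * (\<Sum>n. pochhammer a n * pochhammer b n * pochhammer c n
                 / (fact n * pochhammer (1 + a - b) n * pochhammer (1 + a - c) n)
                 * ((1 + 2 * of_nat n / a) * poly (Qhat k a b c) (of_nat n)) * x ^ n)"
proof -
  define H where "H = HH k a b c"
  define U where "U = UU k a b c"
  define s where "s = 1 + 2 * of_nat k + a"
  define N where "N = 1 + 2 * k"
  have ab': "(1 + a - b) - 1 \<notin> \<int>" using ab by simp
  have ac': "(1 + a - c) - 1 \<notin> \<int>" using ac by simp
  have radH: "fps_conv_radius H > 0" unfolding H_def HH_def
    by (rule Hs_radius) (use notint_poch_nz(2)[OF ab'] notint_poch_nz(2)[OF ac'] in auto)
  have main: "H oo Zs = B (- of_nat N) * Bm s * U"
  proof -
    have "(-1 - 2 * of_nat k :: complex) = - of_nat N" unfolding N_def by simp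
    then show ?thesis using main_fps[OF a b c ab ac, of k] unfolding H_def U_def s_def by simp
  qed
  define f1 where "f1 = (\<lambda>x::complex. eval_fps H (- 4 * x / (1 - x)^2))"
  have f1e: "f1 has_fps_expansion (H oo Zs)"
  proof -
    have "(eval_fps H \<circ> (\<lambda>x::complex. - 4 * x / (1 - x)^2)) has_fps_expansion (H oo Zs)"
      by (rule has_fps_expansion_compose[OF eval_fps_has_fps_expansion[OF radH] exp_Z Zs0])
    then show ?thesis unfolding f1_def comp_def .
  qed
  have pN: "(\<lambda>x::complex. (1 + x) ^ N) has_fps_expansion (1 + fps_X) ^ N"
    by (intro fps_expansion_intros)
  have "(\<lambda>x. (1 + x) ^ N * (1 - x) powr (- s) * f1 x) has_fps_expansion (1 + fps_X) ^ N * Bm (- s) * (H oo Zs)"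
    by (intro has_fps_expansion_mult pN exp_Bm f1e)
  moreover have "(1 + fps_X) ^ N * Bm (- s) * (H oo Zs) = U"
  proof -
    have e1: "(1 + fps_X) ^ N = B (of_nat N)" by (simp add: fps_binomial_of_nat)
    have e2: "B (of_nat N) * B (- of_nat N) = 1" using fps_binomial_add_mult[of "of_nat N" "- of_nat N"] by simp
    have e3: "Bm (- s) * Bm s = 1" using Bm_add[of "-s" s] by simp
    show ?thesis unfolding main e1 using e2 e3 by algebra
  qed
  ultimately have "(\<lambda>x. (1 + x) ^ N * (1 - x) powr (- s) * f1 x) has_fps_expansion U" by simp
  then have radU: "fps_conv_radius U > 0" unfolding has_fps_expansion_def by blast
  define f2 where "f2 = (\<lambda>x::complex. inverse ((1 + x) ^ N) * (1 - x) powr s * eval_fps U x)"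
  have "f2 has_fps_expansion inverse ((1 + fps_X) ^ N) * Bm s * U"
    unfolding f2_def
    by (intro has_fps_expansion_mult has_fps_expansion_inverse pN exp_Bm eval_fps_has_fps_expansion[OF radU]) simp
  moreover have "inverse ((1 + fps_X) ^ N) = B (- of_nat N)" by (simp add: fps_binomial_minus_of_nat)
  ultimately have f2e: "f2 has_fps_expansion (H oo Zs)" unfolding main by simp
  have "eventually (\<lambda>x. eval_fps (H oo Zs) x = f1 x) (nhds 0)" "eventually (\<lambda>x. eval_fps (H oo Zs) x = f2 x) (nhds 0)"
    using f1e f2e unfolding has_fps_expansion_def by blast+
  then have "eventually (\<lambda>x. f1 x = f2 x) (nhds 0)" by eventually_elim simp
  then obtain r where r: "r > 0" "\<And>x. dist x 0 < r \<Longrightarrow> f1 x = f2 x"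
    unfolding eventually_nhds_metric by blast
  have evU: "eval_fps U x = (\<Sum>n. pochhammer a n * pochhammer b n * pochhammer c n
                 / (fact n * pochhammer (1 + a - b) n * pochhammer (1 + a - c) n)
                 * ((1 + 2 * of_nat n / a) * poly (Qhat k a b c) (of_nat n)) * x ^ n)" for x
    unfolding eval_fps_def U_def UU_def Acoef_def by simp
  have hyp: "hyp3F2 (1/2 + of_nat k + a/2) (1 + of_nat k + a/2) (1 - of_nat k + a - b - c)
                 (1 + a - b) (1 + a - c) (- 4 * x / (1 - x)^2) = f1 x" for x
    unfolding f1_def H_def HH_def hyp_eval ..
  show ?thesis
  proof (intro exI[of _ r] conjI allI impI)
    fix x :: complex assume "norm x < r"
    then have "f1 x = f2 x" using r by simp
    then show "hyp3F2 (1/2 + of_nat k + a/2) (1 + of_nat k + a/2) (1 - of_nat k + a - b - c)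
                 (1 + a - b) (1 + a - c) (- 4 * x / (1 - x)^2)
        = inverse ((1 + x) ^ (1 + 2 * k)) * (1 - x) powr (1 + 2 * of_nat k + a)
          * (\<Sum>n. pochhammer a n * pochhammer b n * pochhammer c n
                 / (fact n * pochhammer (1 + a - b) n * pochhammer (1 + a - c) n)
                 * ((1 + 2 * of_nat n / a) * poly (Qhat k a b c) (of_nat n)) * x ^ n)"
      unfolding hyp f2_def evU N_def s_def by simp
  qed (use r in simp)
qed

theorem theorem7:
  fixes a b c :: complex and k :: nat
  assumes "a \<notin> \<int>" and "b \<notin> \<int>" and "c \<notin> \<int>"
    and "a - b \<notin> \<int>" and "a - c \<notin> \<int>"
  shows "(k \<ge> 1 \<longrightarrow> (\<forall>n::complex.
            (of_nat k + a/2) * (1 + a) * b * c * (n + a/2) * poly (Qhat k a b c) n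
          = (n + of_nat k + a/2) * (n + a) * (n + b) * (n + c) * (n + 1/2 + a/2)
              * poly (Qhat (k - 1) (a+1) (b+1) (c+1)) n
          + (n - of_nat k + a/2) * n * (n + a - b) * (n + a - c) * (n - 1/2 + a/2)
              * poly (Qhat (k - 1) (a+1) (b+1) (c+1)) (n - 1)))
    \<and> degree (Qhat k a b c) = 4 * k
    \<and> (\<exists>R. degree R = 2 * k \<and> Qhat k a b c = pcompose R [:0, a, 1:])
    \<and> (\<exists>r>0. \<forall>x::complex. norm x < r \<longrightarrow>
          hyp3F2 (1/2 + of_nat k + a/2) (1 + of_nat k + a/2) (1 - of_nat k + a - b - c)
                 (1 + a - b) (1 + a - c) (- 4 * x / (1 - x)^2)
        = inverse ((1 + x) ^ (1 + 2 * k)) * (1 - x) powr (1 + 2 * of_nat k + a)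
          * (\<Sum>n. pochhammer a n * pochhammer b n * pochhammer c n
                 / (fact n * pochhammer (1 + a - b) n * pochhammer (1 + a - c) n)
                 * ((1 + 2 * of_nat n / a) * poly (Qhat k a b c) (of_nat n)) * x ^ n))"
proof -
  have ab' : "a - b \<notin> \<int>" and ac': "a - c \<notin> \<int>" using assms by auto
  have a0: "a \<noteq> 0" using assms(1) by auto
  have PA: "Qhat k a b c \<noteq> 0 \<and> degree (Qhat k a b c) = 4 * k \<and> (\<forall>x. poly (Qhat k a b c) (-x-a) = poly (Qhat k a b c) x)"
    by (rule poly_all[OF assms(1-3)])
  have part1: "k \<ge> 1 \<longrightarrow> (\<forall>n::complex.
            (of_nat k + a/2) * (1 + a) * b * c * (n + a/2) * poly (Qhat k a b c) n
          = (n + of_nat k + a/2) * (n + a) * (n + b) * (n + c) * (n + 1/2 + a/2)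
              * poly (Qhat (k - 1) (a+1) (b+1) (c+1)) n
          + (n - of_nat k + a/2) * n * (n + a - b) * (n + a - c) * (n - 1/2 + a/2)
              * poly (Qhat (k - 1) (a+1) (b+1) (c+1)) (n - 1))"
  proof (intro impI allI)
    fix n :: complex assume "k \<ge> 1"
    then obtain j where kj: "k = Suc j" by (cases k) auto
    have h1: "poly (smult ((of_nat (Suc j) + a/2) * (1 + a) * b * c) [:a/2, 1:] * Qhat (Suc j) a b c) n = poly (Num j a b c) n"
      using arg_cong[OF raising[OF assms(1-3), of j], of "\<lambda>p. poly p n"] .
    then show "(of_nat k + a/2) * (1 + a) * b * c * (n + a/2) * poly (Qhat k a b c) n
          = (n + of_nat k + a/2) * (n + a) * (n + b) * (n + c) * (n + 1/2 + a/2)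
              * poly (Qhat (k - 1) (a+1) (b+1) (c+1)) n
          + (n - of_nat k + a/2) * n * (n + a - b) * (n + a - c) * (n - 1/2 + a/2)
              * poly (Qhat (k - 1) (a+1) (b+1) (c+1)) (n - 1)"
      unfolding kj poly_Num poly_mult poly_smult diff_Suc_1 by (simp add: algebra_simps)
  qed
  have part3: "\<exists>R. degree R = 2 * k \<and> Qhat k a b c = pcompose R [:0, a, 1:]"
  proof -
    obtain R where R: "Qhat k a b c = R \<circ>\<^sub>p [:0, a, 1:]" using sym_poly_comp[OF a0] PA by blast
    have "degree (Qhat k a b c) = degree R * 2" unfolding R by (simp add: degree_pcompose)
    then have "degree R = 2 * k" using PA by simp
    then show ?thesis using R by blast
  qed
  show ?thesis using part1 PA part3 analytic_part[OF assms(1-3) ab' ac'] by blast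
qed

end
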